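(* Let $X,Y$ be metric spaces, $U\subset X$ and $V\subset Y$ open sets, and $\Psi:X\times X\rightrightarrows Y$ a set-valued mapping with closed graph, where either $X$ or $\operatorname{gr}\Psi$ is complete. Set $F(x)=\Psi(x,x)$. Let $0\le\ell<r$ and assume: (a) for every $u\in U$, every $x\in U$, every $v\in\Psi(x,u)$, every $t$ with $0<t<m(x)$ and every $y\in V$ with $d(y,v)<rt$, there is $x'$ with $d(x,x')\le r^{-1}d(y,v)$ and $y\in\Psi(x',u)$; (b) for every $x\in U$ and all $u,w\in U$: $\sup\{d(z,\Psi(x,w)) : z\in\Psi(x,u)\cap V\}\le \ell\,d(u,w)$. Then $F$ is Milyutin regular on $U\times V$ with $\operatorname{sur}_mF(U|V)\ge r-\ell$.
   Context: $m(x)=d(x,X\setminus U)$ ($d(x,\emptyset)=+\infty$). $B(A,s)=\{y:\exists a\in A,\ d(y,a)\le s\}$. $F$ is Milyutin regular on $U\times V$ if there is $r>0$ with $B(F(x),rt)\cap V\subset F(B(x,t))$ for all $x\in U$, $0\le t<m(x)$; $\operatorname{sur}_mF(U|V)$ is the supremum of such $r$ ($0$ if none). *)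

theory Defs
  imports "HOL-Analysis.Analysis"
begin

definition edist :: "'a::metric_space \<Rightarrow> 'a set \<Rightarrow> ereal" where
  "edist x A = (if A = {} then \<infinity> else ereal (infdist x A))"

text \<open>m(x) = d(x, X \ U)\<close>
definition dist_compl :: "'a::metric_space set \<Rightarrow> 'a \<Rightarrow> ereal" where
  "dist_compl U x = edist x (- U)"

definition Bset :: "'a::metric_space set \<Rightarrow> real \<Rightarrow> 'a set" where
  "Bset A s = {y. \<exists>a\<in>A. dist y a \<le> s}"

definition graph :: "('a \<Rightarrow> 'b set) \<Rightarrow> ('a \<times> 'b) set" where
  "graph F = {(x, y). y \<in> F x}"

definition milyutin_rate :: "('a::metric_space \<Rightarrow> 'b::metric_space set) \<Rightarrow> 'a set \<Rightarrow> 'b set \<Rightarrow> real \<Rightarrow> bool" where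
  "milyutin_rate F U V r \<longleftrightarrow>
     (\<forall>x\<in>U. \<forall>t. 0 \<le> t \<and> ereal t < dist_compl U x \<longrightarrow>
        Bset (F x) (r * t) \<inter> V \<subseteq> (\<Union>x'\<in>Bset {x} t. F x'))"

definition milyutin_regular :: "('a::metric_space \<Rightarrow> 'b::metric_space set) \<Rightarrow> 'a set \<Rightarrow> 'b set \<Rightarrow> bool" where
  "milyutin_regular F U V \<longleftrightarrow> (\<exists>r>0. milyutin_rate F U V r)"

definition sur_m :: "('a::metric_space \<Rightarrow> 'b::metric_space set) \<Rightarrow> 'a set \<Rightarrow> 'b set \<Rightarrow> ereal" where
  "sur_m F U V = (if milyutin_regular F U V
      then Sup {ereal r | r. r > 0 \<and> milyutin_rate F U V r} else 0)"

end

theory Submission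
  imports Defs
begin

lemma infdist_lessE:
  assumes "A \<noteq> {}" "infdist x A < e"
  shows "\<exists>a\<in>A. dist x a < e"
proof -
  have "bdd_below ((\<lambda>a. dist x a) ` A)" by (rule bdd_belowI[of _ 0]) auto
  hence "(INF a\<in>A. dist x a) < e \<longleftrightarrow> (\<exists>a\<in>A. dist x a < e)" using cINF_less_iff[OF assms(1)] by blast
  thus ?thesis using assms infdist_notempty[OF assms(1)] by simp
qed

lemma dc_step:
  fixes x z :: "'a::metric_space"
  assumes "x \<in> U" "ereal t < dist_compl U x" "dist x z < t"
  shows "ereal (t - dist x z) < dist_compl U z \<and> z \<in> U"
proof (cases "- U = {}")
  case True
  thus ?thesis by (auto simp add: dist_compl_def edist_def)
next
  case False
  have t: "t < infdist x (- U)" using assms(2) False by (simp add: dist_compl_def edist_def)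
  have zU: "z \<in> U"
  proof (rule ccontr)
    assume "z \<notin> U"
    hence "infdist x (- U) \<le> dist x z" by (intro infdist_le) auto
    thus False using t assms(3) by linarith
  qed
  have "infdist x (- U) \<le> infdist z (- U) + dist x z" by (rule infdist_triangle)
  hence "t - dist x z < infdist z (- U)" using t by linarith
  thus ?thesis using False zU by (simp add: dist_compl_def edist_def)
qed

lemma dist_pair_le:
  fixes a c :: "'a::metric_space" and b d :: "'b::metric_space"
  shows "dist (a, b) (c, d) \<le> dist a c + dist b d"
proof -
  have "dist (a,b) (c,d) = sqrt ((dist a c)^2 + (dist b d)^2)" by (simp add: dist_Pair_Pair)
  also have "\<dots> \<le> sqrt ((dist a c + dist b d)^2)"
    by (intro real_sqrt_le_mono) (simp add: power2_eq_square algebra_simps)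
  also have "\<dots> = dist a c + dist b d" by simp
  finally show ?thesis .
qed

lemma Cauchy_Pair2:
  fixes X :: "nat \<Rightarrow> 'a::metric_space" and Y :: "nat \<Rightarrow> 'b::metric_space"
  assumes "Cauchy X" "Cauchy Y"
  shows "Cauchy (\<lambda>n. (X n, Y n))"
proof (rule metric_CauchyI)
  fix e :: real assume e: "0 < e"
  obtain M where M: "\<forall>m\<ge>M. \<forall>n\<ge>M. dist (X m) (X n) < e/2"
    using metric_CauchyD[OF assms(1), of "e/2"] e by auto
  obtain N where N: "\<forall>m\<ge>N. \<forall>n\<ge>N. dist (Y m) (Y n) < e/2"
    using metric_CauchyD[OF assms(2), of "e/2"] e by auto
  have "\<forall>m\<ge>max M N. \<forall>n\<ge>max M N. dist (X m, Y m) (X n, Y n) < e"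
  proof (intro allI impI)
    fix m n assume "max M N \<le> m" "max M N \<le> n"
    hence "dist (X m) (X n) < e/2" "dist (Y m) (Y n) < e/2" using M N by auto
    thus "dist (X m, Y m) (X n, Y n) < e" using dist_pair_le[of "X m" "Y m" "X n" "Y n"] by linarith
  qed
  thus "\<exists>M. \<forall>m\<ge>M. \<forall>n\<ge>M. dist (X m, Y m) (X n, Y n) < e" by blast
qed

lemma Cauchy_geom:
  fixes xs :: "nat \<Rightarrow> 'a::metric_space"
  assumes q: "0 \<le> q" "q < 1" and K: "0 \<le> K"
    and d: "\<And>n. dist (xs n) (xs (Suc n)) \<le> K * (1 - q) * q ^ n"
  shows "Cauchy xs"
proof -
  have A: "dist (xs m) (xs (m + k)) \<le> K * q ^ m * (1 - q ^ k)" for m k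
  proof (induct k)
    case 0 thus ?case by simp
  next
    case (Suc k)
    have "dist (xs m) (xs (m + Suc k)) \<le> dist (xs m) (xs (m + k)) + dist (xs (m+k)) (xs (Suc (m + k)))"
      using dist_triangle by simp
    also have "\<dots> \<le> K * q ^ m * (1 - q ^ k) + K * (1 - q) * q ^ (m + k)"
      using Suc d[of "m+k"] by linarith
    also have "\<dots> = K * q ^ m * (1 - q ^ Suc k)" by (simp add: power_add algebra_simps)
    finally show ?case .
  qed
  have B: "dist (xs m) (xs n) \<le> K * q ^ N" if "N \<le> m" "N \<le> n" for m n N
  proof -
    have gen: "dist (xs m) (xs n) \<le> K * q ^ m" if "m \<le> n" for m n
    proof -
      have "dist (xs m) (xs n) \<le> K * q ^ m * (1 - q ^ (n - m))" using A[of m "n - m"] that by simp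
      also have "\<dots> \<le> K * q ^ m" using q K by (simp add: mult_left_le)
      finally show ?thesis .
    qed
    have "K * q ^ m \<le> K * q ^ N" "K * q ^ n \<le> K * q ^ N"
      using that q K by (auto intro!: mult_left_mono power_decreasing)
    thus ?thesis using gen[of m n] gen[of n m] by (cases "m \<le> n") (auto simp: dist_commute)
  qed
  show ?thesis
  proof (rule metric_CauchyI)
    fix e :: real assume e: "0 < e"
    obtain N where N: "q ^ N < e / (K + 1)" using real_arch_pow_inv[of "e/(K+1)" q] e K q by auto
    have "K * q ^ N \<le> (K + 1) * q ^ N" using q by (intro mult_right_mono) auto
    also have "\<dots> < e" using N K by (simp add: field_simps)
    finally have "K * q ^ N < e" .
    thus "\<exists>M. \<forall>m\<ge>M. \<forall>n\<ge>M. dist (xs m) (xs n) < e" using B by (meson le_less_trans)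
  qed
qed


lemma key:
  fixes U :: "'a::metric_space set" and V :: "'b::metric_space set"
    and \<Psi> :: "'a \<Rightarrow> 'a \<Rightarrow> 'b set"
    and l r :: real
  assumes cl: "closed (graph (\<lambda>(x, u). \<Psi> x u))"
    and cp: "complete (UNIV :: 'a set) \<or> complete (graph (\<lambda>(x, u). \<Psi> x u))"
    and l0: "0 \<le> l" and lr: "l < r"
    and a: "\<forall>u\<in>U. \<forall>x\<in>U. \<forall>v\<in>\<Psi> x u. \<forall>t. 0 < t \<and> ereal t < dist_compl U x \<longrightarrow>
              (\<forall>y\<in>V. dist y v < r * t \<longrightarrow> (\<exists>x'. dist x x' \<le> dist y v / r \<and> y \<in> \<Psi> x' u))"
    and b: "\<forall>x\<in>U. \<forall>u\<in>U. \<forall>w\<in>U.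
              Sup {edist z (\<Psi> x w) | z. z \<in> \<Psi> x u \<inter> V} \<le> ereal (l * dist u w)"
    and xU: "x \<in> U" and t0: "0 < t" and tm: "ereal t < dist_compl U x"
    and yV: "y \<in> V" and v0: "v0 \<in> \<Psi> x x" and dv0: "dist y v0 < (r - l) * t"
  shows "\<exists>x'. dist x' x \<le> t \<and> y \<in> \<Psi> x' x'"
proof -
  have r0: "r > 0" using l0 lr by linarith
  define e0 where "e0 = dist y v0"
  have e00: "e0 \<ge> 0" by (simp add: e0_def)
  have "e0 / (r * t) < 1 - l / r"
    using dv0 r0 t0 by (simp add: e0_def field_simps)
  define q where "q = (l/r + (1 - e0/(r*t)))/2"
  have q1: "l / r < q" "q < 1 - e0/(r*t)" using \<open>e0 / (r * t) < 1 - l / r\<close> by (auto simp: q_def)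
  have q0: "0 \<le> q" using q1 l0 r0 by (smt (verit) divide_nonneg_pos)
  have qlt1: "q < 1" using q1 e00 r0 t0 by (smt (verit) divide_nonneg_pos mult_pos_pos)
  define K where "K = e0 / (r * (1 - q))"
  have K0: "0 \<le> K" using e00 r0 qlt1 by (simp add: K_def)
  have "e0/(r*t) < 1 - q" using q1 by linarith
  hence Kt: "K < t" using r0 t0 qlt1 by (simp add: K_def field_simps)
  have e0K: "e0 = K * r * (1 - q)" using r0 qlt1 by (simp add: K_def field_simps)
  define P where "P n p = (fst p \<in> U \<and> snd p \<in> \<Psi> (fst p) (fst p) \<and> dist y (snd p) \<le> q^n * e0
        \<and> dist x (fst p) \<le> K * (1 - q^n))" for n p
  define Q where "Q n p p' = (y \<in> \<Psi> (fst p') (fst p) \<and> dist (fst p) (fst p') \<le> K * (1 - q) * q ^ n)"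
    for n :: nat and p p' :: "'a \<times> 'b"
  have P0: "P 0 (x, v0)" using xU v0 by (simp add: P_def e0_def)
  have step: "\<exists>p'. P (Suc n) p' \<and> Q n p p'" if Pn: "P n p" for n p
  proof -
    obtain xn vn where p: "p = (xn, vn)" by (cases p)
    have xnU: "xn \<in> U" and vn: "vn \<in> \<Psi> xn xn" and en: "dist y vn \<le> q^n * e0"
      and dxn: "dist x xn \<le> K * (1 - q^n)" using Pn by (auto simp: P_def p)
    have qn0: "0 \<le> q ^ n" using q0 by simp
    have qsuc: "q ^ Suc n \<le> q ^ n" using q0 qlt1 by (simp add: mult_left_le_one_le)
    show ?thesis
    proof (cases "dist y vn = 0")
      case True
      hence "y = vn" by simp
      have "K * (1 - q ^ n) \<le> K * (1 - q ^ Suc n)" using K0 qsuc by (intro mult_left_mono) auto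
      hence "P (Suc n) p" using Pn True qn0 q0 e00 unfolding P_def p
        by auto
      moreover have "Q n p p" using vn \<open>y = vn\<close> K0 q0 qlt1 by (simp add: Q_def p)
      ultimately show ?thesis by blast
    next
      case False
      hence epos: "dist y vn > 0" by simp
      have sum: "dist x xn + dist y vn / r \<le> K * (1 - q ^ Suc n)"
      proof -
        have "dist y vn / r \<le> q^n * e0 / r" using en r0 by (simp add: divide_right_mono)
        also have "\<dots> = K * (1 - q) * q ^ n" using e0K r0 by simp
        finally show ?thesis using dxn by (simp add: algebra_simps)
      qed
      have "K * (1 - q ^ Suc n) \<le> K" using K0 q0 by (simp add: mult_left_le)
      hence lt: "dist x xn + dist y vn / r < t" using sum Kt by linarith
      define tn where "tn = t - dist x xn"
      have tn0: "0 < tn" using lt epos r0 unfolding tn_def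
        by (smt (verit) divide_pos_pos)
      have etn: "dist y vn < r * tn" using lt r0 unfolding tn_def by (simp add: field_simps)
      have "ereal tn < dist_compl U xn" unfolding tn_def
        using dc_step[OF xU tm, of xn] tn0 tn_def by auto
      then obtain x' where x': "dist xn x' \<le> dist y vn / r" "y \<in> \<Psi> x' xn"
        using a xnU vn tn0 yV etn by blast
      have dxx': "dist x x' \<le> K * (1 - q ^ Suc n)"
        using dist_triangle[of x x' xn] x'(1) sum by (simp add: dist_commute)
      hence "dist x x' < t" using \<open>K * (1 - q ^ Suc n) \<le> K\<close> Kt by linarith
      hence x'U: "x' \<in> U" using dc_step[OF xU tm] by blast
      have "edist y (\<Psi> x' x') \<le> Sup {edist z (\<Psi> x' x') | z. z \<in> \<Psi> x' xn \<inter> V}"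
        using x'(2) yV by (intro Sup_upper) blast
      also have "\<dots> \<le> ereal (l * dist xn x')" using b x'U xnU by blast
      finally have ed: "edist y (\<Psi> x' x') \<le> ereal (l * dist xn x')" .
      hence ne: "\<Psi> x' x' \<noteq> {}" by (auto simp: edist_def)
      hence id: "infdist y (\<Psi> x' x') \<le> l * dist xn x'" using ed by (simp add: edist_def)
      have "l * dist xn x' \<le> l * (dist y vn / r)" using x'(1) l0 by (rule mult_left_mono)
      also have "\<dots> = (l / r) * dist y vn" by simp
      also have "\<dots> < q * dist y vn" using q1(1) epos by (rule mult_strict_right_mono)
      finally have "infdist y (\<Psi> x' x') < q * dist y vn" using id by linarith
      then obtain v' where v': "v' \<in> \<Psi> x' x'" "dist y v' < q * dist y vn"
        using infdist_lessE[OF ne] by blast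
      have "q * dist y vn \<le> q * (q^n * e0)" using en q0 by (simp add: mult_left_mono)
      hence "dist y v' \<le> q ^ Suc n * e0" using v'(2) by simp
      hence "P (Suc n) (x', v')" using x'U v' dxx' by (simp add: P_def)
      moreover have "dist y vn / r \<le> K * (1 - q) * q ^ n"
      proof -
        have "dist y vn / r \<le> q^n * e0 / r" using en r0 by (simp add: divide_right_mono)
        also have "\<dots> = K * (1 - q) * q ^ n" using e0K r0 by simp
        finally show ?thesis .
      qed
      hence "Q n p (x', v')" using x' by (simp add: Q_def p)
      ultimately show ?thesis by blast
    qed
  qed
  obtain f where f: "\<And>n. P n (f n) \<and> Q n (f n) (f (Suc n))"
    using dependent_nat_choice[of P Q] P0 step by blast
  define xs where "xs n = fst (f n)" for n
  have xsd: "dist (xs n) (xs (Suc n)) \<le> K * (1 - q) * q ^ n" for n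
    using f[of n] by (simp add: Q_def xs_def)
  have xsy: "y \<in> \<Psi> (xs (Suc n)) (xs n)" for n using f[of n] by (simp add: Q_def xs_def)
  have xsx: "dist x (xs n) \<le> K" for n
  proof -
    have "dist x (xs n) \<le> K * (1 - q ^ n)" using f[of n] by (simp add: P_def xs_def)
    also have "\<dots> \<le> K" using K0 q0 by (simp add: mult_left_le)
    finally show ?thesis .
  qed
  have cx: "Cauchy xs" using Cauchy_geom[OF q0 qlt1 K0 xsd] .
  define g where "g n = ((xs (Suc n), xs n), y)" for n
  have gG: "g n \<in> graph (\<lambda>(x, u). \<Psi> x u)" for n using xsy by (simp add: g_def graph_def)
  obtain z where z: "xs \<longlonglongrightarrow> z"
    using cp
  proof
    assume "complete (UNIV :: 'a set)"
    thus ?thesis using cx that unfolding complete_def by blast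
  next
    assume c: "complete (graph (\<lambda>(x, u). \<Psi> x u))"
    have c1: "Cauchy (\<lambda>n. y)" by (rule metric_CauchyI) auto
    have c2: "Cauchy (\<lambda>n. xs (Suc n))"
    proof (rule metric_CauchyI)
      fix e :: real assume "0 < e"
      then obtain M where "\<forall>m\<ge>M. \<forall>n\<ge>M. dist (xs m) (xs n) < e" using metric_CauchyD[OF cx] by blast
      thus "\<exists>M. \<forall>m\<ge>M. \<forall>n\<ge>M. dist (xs (Suc m)) (xs (Suc n)) < e" by (intro exI[of _ M]) auto
    qed
    have "Cauchy g" unfolding g_def
      by (intro Cauchy_Pair2 c1 c2 cx)
    then obtain L where "g \<longlonglongrightarrow> L" using c gG unfolding complete_def by blast
    hence "(\<lambda>n. fst (fst (g n))) \<longlonglongrightarrow> fst (fst L)" by (intro tendsto_fst)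
    hence "(\<lambda>n. xs (Suc n)) \<longlonglongrightarrow> fst (fst L)" by (simp add: g_def)
    thus ?thesis using that LIMSEQ_imp_Suc by blast
  qed
  have "g \<longlonglongrightarrow> ((z, z), y)" unfolding g_def
    by (intro tendsto_intros LIMSEQ_Suc z)
  hence "((z, z), y) \<in> graph (\<lambda>(x, u). \<Psi> x u)" using closed_sequentially[OF cl] gG by blast
  hence yz: "y \<in> \<Psi> z z" by (simp add: graph_def)
  have "(\<lambda>n. dist x (xs n)) \<longlonglongrightarrow> dist x z" by (intro tendsto_intros z)
  hence "dist x z \<le> K" using xsx by (intro LIMSEQ_le_const2) auto
  thus ?thesis using yz Kt by (intro exI[of _ z]) (simp add: dist_commute)
qed


theorem mainTheorem3:
  fixes U :: "'a::metric_space set" and V :: "'b::metric_space set"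
    and \<Psi> :: "'a \<Rightarrow> 'a \<Rightarrow> 'b set" and F :: "'a \<Rightarrow> 'b set"
    and l r :: real
  assumes "open U" and "open V"
    and "closed (graph (\<lambda>(x, u). \<Psi> x u))"
    and "complete (UNIV :: 'a set) \<or> complete (graph (\<lambda>(x, u). \<Psi> x u))"
    and "\<And>x. F x = \<Psi> x x"
    and "0 \<le> l" and "l < r"
    and a: "\<forall>u\<in>U. \<forall>x\<in>U. \<forall>v\<in>\<Psi> x u. \<forall>t. 0 < t \<and> ereal t < dist_compl U x \<longrightarrow>
              (\<forall>y\<in>V. dist y v < r * t \<longrightarrow> (\<exists>x'. dist x x' \<le> dist y v / r \<and> y \<in> \<Psi> x' u))"
    and b: "\<forall>x\<in>U. \<forall>u\<in>U. \<forall>w\<in>U.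
              Sup {edist z (\<Psi> x w) | z. z \<in> \<Psi> x u \<inter> V} \<le> ereal (l * dist u w)"
  shows "milyutin_regular F U V \<and> sur_m F U V \<ge> ereal (r - l)"
proof -
  have rate: "milyutin_rate F U V r'" if r': "0 < r'" "r' < r - l" for r'
    unfolding milyutin_rate_def
  proof (intro ballI allI impI subsetI)
    fix x t y assume xU: "x \<in> U" and tt: "0 \<le> t \<and> ereal t < dist_compl U x"
      and yy: "y \<in> Bset (F x) (r' * t) \<inter> V"
    then obtain v0 where v0: "v0 \<in> \<Psi> x x" "dist y v0 \<le> r' * t" and yV: "y \<in> V"
      by (auto simp: Bset_def assms(5))
    show "y \<in> (\<Union>x'\<in>Bset {x} t. F x')"
    proof (cases "t = 0")
      case True
      hence "y = v0" using v0 r' by simp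
      thus ?thesis using v0 True by (auto simp: Bset_def assms(5))
    next
      case False
      hence t0: "0 < t" using tt by simp
      have "dist y v0 < (r - l) * t" using v0(2) r' t0
        by (smt (verit) mult_strict_right_mono)
      then obtain x' where "dist x' x \<le> t" "y \<in> \<Psi> x' x'"
        using key[OF assms(3,4,6,7) a b xU t0 _ yV v0(1)] tt by blast
      thus ?thesis by (auto simp: Bset_def assms(5))
    qed
  qed
  have rl: "0 < r - l" using assms(7) by simp
  have reg: "milyutin_regular F U V"
    unfolding milyutin_regular_def using rate[of "(r - l)/2"] rl by (intro exI[of _ "(r-l)/2"]) auto
  have "ereal (r - l) \<le> Sup {ereal r' | r'. r' > 0 \<and> milyutin_rate F U V r'}"
    unfolding le_Sup_iff
  proof (intro allI impI)
    fix w assume w: "w < ereal (r - l)"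
    obtain z where z: "max w 0 < z" "z < ereal (r - l)" using w rl dense[of "max w 0" "ereal (r - l)"] by auto
    have zf: "z = ereal (real_of_ereal z)" using z by (cases z) auto
    have "0 < real_of_ereal z" "real_of_ereal z < r - l" using z zf
      by (metis ereal_less(2) max.strict_boundedE, metis ereal_less_eq(3) less_ereal.simps(1))
    hence "z \<in> {ereal r' | r'. r' > 0 \<and> milyutin_rate F U V r'}" using rate zf by blast
    thus "\<exists>a\<in>{ereal r' | r'. r' > 0 \<and> milyutin_rate F U V r'}. w < a" using z by auto
  qed
  thus ?thesis using reg by (simp add: sur_m_def)
qed

end
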